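(* Let $k\ge 2$ be an integer. Every finite simple graph $G$ is an induced subgraph of some finite simple graph $H$ that admits a closed neighborhood balanced $k$-coloring.
   Context: For a vertex $v$ of a graph $G$, $N[v]=\{v\}\cup\{u : uv\in E(G)\}$ is its closed neighborhood. For an integer $k\ge 2$, a closed neighborhood balanced $k$-coloring of $G$ is a map $c: V(G)\to\{1,2,\dots,k\}$ such that for every vertex $v$ the numbers $|\{u\in N[v] : c(u)=i\}|$, $i=1,\dots,k$, are all equal. *)

theory Defs
  imports Main
begin

definition simple_graph :: "'a set \<Rightarrow> 'a set set \<Rightarrow> bool" where
  "simple_graph V E \<longleftrightarrow> finite V \<and> (\<forall>e\<in>E. e \<subseteq> V \<and> card e = 2)"

definition closed_nbhd :: "'a set set \<Rightarrow> 'a \<Rightarrow> 'a set" where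
  "closed_nbhd E v = insert v {u. {u, v} \<in> E}"

definition cnb_coloring :: "'a set \<Rightarrow> 'a set set \<Rightarrow> nat \<Rightarrow> ('a \<Rightarrow> nat) \<Rightarrow> bool" where
  "cnb_coloring V E k c \<longleftrightarrow>
     (\<forall>v\<in>V. c v \<in> {1..k}) \<and>
     (\<forall>v\<in>V. \<forall>i\<in>{1..k}. \<forall>j\<in>{1..k}.
        card {u\<in>closed_nbhd E v. c u = i} = card {u\<in>closed_nbhd E v. c u = j})"

definition induced_embedding ::
  "('a \<Rightarrow> 'b) \<Rightarrow> 'a set \<Rightarrow> 'a set set \<Rightarrow> 'b set \<Rightarrow> 'b set set \<Rightarrow> bool" where
  "induced_embedding f V E W F \<longleftrightarrow>
     inj_on f V \<and> f ` V \<subseteq> W \<and>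
     (\<forall>u\<in>V. \<forall>v\<in>V. {f u, f v} \<in> F \<longleftrightarrow> {u, v} \<in> E)"

end

theory Submission
  imports Defs
begin

definition adjL :: "nat \<Rightarrow> 'a set \<Rightarrow> 'a set set \<Rightarrow> ('a \<times> nat) \<Rightarrow> ('a \<times> nat) \<Rightarrow> bool" where
  "adjL k V E x y \<longleftrightarrow> fst x \<in> V \<and> fst y \<in> V \<and> snd x \<in> {1..k} \<and> snd y \<in> {1..k} \<and>
     ((fst x = fst y \<and> snd x \<noteq> snd y) \<or> {fst x, fst y} \<in> E)"

lemma adjL_sym: "adjL k V E x y \<Longrightarrow> adjL k V E y x"
  unfolding adjL_def by (auto simp: insert_commute)

lemma memF: "{x, y} \<in> {{a, b} | a b. adjL k V E a b} \<longleftrightarrow> adjL k V E x y"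
proof
  assume "{x, y} \<in> {{a, b} | a b. adjL k V E a b}"
  then obtain a b where "{x,y} = {a,b}" "adjL k V E a b" by blast
  then show "adjL k V E x y" by (metis doubleton_eq_iff adjL_sym)
qed blast

theorem theorem2p6:
  fixes k :: nat and V :: "'a set" and E :: "'a set set"
  assumes "k \<ge> 2" and "simple_graph V E"
  shows "\<exists>(W :: ('a \<times> nat) set) F f c.
           simple_graph W F \<and> induced_embedding f V E W F \<and> cnb_coloring W F k c"
proof -
  define W where "W = V \<times> {1..k}"
  define F where "F = {{a, b} | a b. adjL k V E a b}"
  have fin: "finite V" and Ecard: "\<And>e. e \<in> E \<Longrightarrow> e \<subseteq> V \<and> card e = 2"
    using assms(2) unfolding simple_graph_def by auto
  have Eneq: "u \<noteq> v" if "{u, v} \<in> E" for u v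
    using Ecard[OF that] by auto
  have Esub: "u \<in> V" "v \<in> V" if "{u, v} \<in> E" for u v
    using Ecard[OF that] by auto
  have sg: "simple_graph W F"
    unfolding simple_graph_def
  proof
    show "finite W" using fin unfolding W_def by simp
    show "\<forall>e\<in>F. e \<subseteq> W \<and> card e = 2"
    proof
      fix e assume "e \<in> F"
      then obtain a b where e: "e = {a, b}" "adjL k V E a b" unfolding F_def by blast
      have "a \<noteq> b" using e(2) Eneq unfolding adjL_def by (auto simp: prod_eq_iff)
      moreover have "a \<in> W" "b \<in> W" using e(2) unfolding adjL_def W_def
        by (auto simp: mem_Times_iff)
      ultimately show "e \<subseteq> W \<and> card e = 2" using e by auto
    qed
  qed
  have ie: "induced_embedding (\<lambda>v. (v, 1::nat)) V E W F"
    unfolding induced_embedding_def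
  proof (intro conjI ballI)
    show "inj_on (\<lambda>v. (v, 1::nat)) V" by (auto simp: inj_on_def)
    show "(\<lambda>v. (v, 1::nat)) ` V \<subseteq> W" using assms(1) unfolding W_def by auto
    fix u v assume "u \<in> V" "v \<in> V"
    have "({(u, 1::nat), (v, 1)} \<in> F) = adjL k V E (u, 1) (v, 1)"
      unfolding F_def by (rule memF)
    also have "\<dots> = ({u, v} \<in> E)"
      using assms(1) \<open>u \<in> V\<close> \<open>v \<in> V\<close> by (simp add: adjL_def)
    finally show "({(u, 1), (v, 1)} \<in> F) = ({u, v} \<in> E)" .
  qed
  have nb: "closed_nbhd F (v, i) = (insert v {u. {u, v} \<in> E}) \<times> {1..k}"
    if "v \<in> V" "i \<in> {1..k}" for v i
  proof (rule set_eqI)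
    fix x :: "'a \<times> nat"
    obtain u j where x: "x = (u, j)" by (cases x)
    have "x \<in> closed_nbhd F (v, i) \<longleftrightarrow> x = (v, i) \<or> adjL k V E x (v, i)"
      unfolding closed_nbhd_def F_def memF by simp
    also have "\<dots> \<longleftrightarrow> x \<in> (insert v {u. {u, v} \<in> E}) \<times> {1..k}"
      unfolding x adjL_def using that Esub[of u v] by auto
    finally show "x \<in> closed_nbhd F (v, i) \<longleftrightarrow> x \<in> (insert v {u. {u, v} \<in> E}) \<times> {1..k}" .
  qed
  have cnb: "cnb_coloring W F k snd"
    unfolding cnb_coloring_def
  proof (intro conjI ballI)
    fix x assume "x \<in> W" then show "snd x \<in> {1..k}" unfolding W_def by auto
  next
    fix x i j assume x: "x \<in> W" and i: "i \<in> {1..(k::nat)}" and j: "j \<in> {1..k}"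
    obtain v l where xv: "x = (v, l)" "v \<in> V" "l \<in> {1..k}" using x unfolding W_def by auto
    define N where "N = insert v {u. {u, v} \<in> E}"
    have Nfin: "finite N" unfolding N_def using fin Esub
      by (metis (no_types, lifting) finite_insert mem_Collect_eq rev_finite_subset subsetI)
    have c: "card {u \<in> closed_nbhd F x. snd u = m} = card N" if "m \<in> {1..k}" for m
    proof -
      have "closed_nbhd F x = N \<times> {1..k}" unfolding xv(1) N_def by (rule nb[OF xv(2) xv(3)])
      then have "{u \<in> closed_nbhd F x. snd u = m} = N \<times> {m}"
        using that by (auto simp del: insert_iff)
      then show ?thesis using Nfin by (simp add: card_cartesian_product)
    qed
    show "card {u \<in> closed_nbhd F x. snd u = i} = card {u \<in> closed_nbhd F x. snd u = j}"
      using c[OF i] c[OF j] by simp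
  qed
  show ?thesis using sg ie cnb by blast
qed

end
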